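(* Let $M,N$ be weights of $\mathbb{R}^m,\mathbb{R}^n$, let $A\in\mathbb{R}^{m\times n}$ with $MA=AN$, and let $K\subseteq\mathbb{R}^n$ be a closed cone. If $$(A^{[\dagger]})^{[*]}\circ I\circ K^{[*]}\subseteq A\circ I\circ K,$$ then $$(A^{[*]}\circ A)^{[\dagger]}\circ K^{[*]}\subseteq K+\mathcal{N}(A\circ I).$$
   Context: A weight is a real symmetric matrix $W$ with $W^2=I$. $\mathbb{R}^m$ and $\mathbb{R}^n$ carry weights $M\in\mathbb{R}^{m\times m}$ and $N\in\mathbb{R}^{n\times n}$, respectively. The indefinite inner product on the space with weight $W$ is $[x,y]=\langle x,Wy\rangle$. Indefinite matrix product: if $B$ has $p$ columns and $C$ has $p$ rows (or is a vector in $\mathbb{R}^p$), $p\in\{m,n\}$, and $W$ is the weight of $\mathbb{R}^p$, then $B\circ C:=BWC$. $I$ denotes an identity matrix of the appropriate size. Indefinite adjoint of $B\in\mathbb{R}^{p\times q}$: $B^{[*]}:=W_qB^TW_p$, where $W_p,W_q$ are the weights of $\mathbb{R}^p,\mathbb{R}^q$. Indefinite Moore–Penrose inverse: for $B\in\mathbb{R}^{p\times q}$, $B^{[\dagger]}$ is the unique $X\in\mathbb{R}^{q\times p}$ such that - $B\circ X\circ B=B$, - $X\circ B\circ X=X$, - $(B\circ X)^{[*]}=B\circ X$, - $(X\circ B)^{[*]}=X\circ B$. It equals $W_qB^\dagger W_p$. Range and null space: for a matrix $B$ with $q$ columns, $\mathcal{R}(B)=\{B\circ x:x\in\mathbb{R}^q\}$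 and $\mathcal{N}(B)=\{x\in\mathbb{R}^q:B\circ x=0\}$. A cone is a nonempty set closed under addition and under multiplication by nonnegative scalars. For $S$ a subset of $\mathbb{R}^p$ with weight $W$, the dual is $S^{[*]}=\{x\in\mathbb{R}^p:[x,t]\ge0\ \forall t\in S\}$. For a matrix $B$ and a set $S$, $B\circ S=\{B\circ s:s\in S\}$. The sum of sets is the Minkowski sum. *)

theory Defs
  imports "HOL-Analysis.Analysis"
begin

text \<open>Dimensions are type indices: R^m = real^'m, R^n = real^'n.
  Weights are passed explicitly to every indefinite operation.\<close>

definition weight :: "real^'k^'k \<Rightarrow> bool" where
  "weight W \<longleftrightarrow> transpose W = W \<and> W ** W = mat 1"

text \<open>Indefinite matrix product B o C = B W C, W the weight of the space
  indexed by the columns of B.\<close>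
definition imult :: "real^'p^'p \<Rightarrow> real^'p^'r \<Rightarrow> real^'s^'p \<Rightarrow> real^'s^'r" where
  "imult W B C = B ** W ** C"

definition iapply :: "real^'p^'p \<Rightarrow> real^'p^'r \<Rightarrow> real^'p \<Rightarrow> real^'r" where
  "iapply W B x = B *v (W *v x)"

definition iimage :: "real^'p^'p \<Rightarrow> real^'p^'r \<Rightarrow> (real^'p) set \<Rightarrow> (real^'r) set" where
  "iimage W B S = (\<lambda>s. iapply W B s) ` S"

definition iadj :: "real^'p^'p \<Rightarrow> real^'q^'q \<Rightarrow> real^'q^'p \<Rightarrow> real^'p^'q" where
  "iadj Wp Wq B = Wq ** transpose B ** Wp"

definition impinv :: "real^'p^'p \<Rightarrow> real^'q^'q \<Rightarrow> real^'q^'p \<Rightarrow> real^'p^'q" where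
  "impinv Wp Wq B = (THE X.
      imult Wp (imult Wq B X) B = B \<and>
      imult Wq (imult Wp X B) X = X \<and>
      iadj Wp Wp (imult Wq B X) = imult Wq B X \<and>
      iadj Wq Wq (imult Wp X B) = imult Wp X B)"

definition inull :: "real^'p^'p \<Rightarrow> real^'p^'r \<Rightarrow> (real^'p) set" where
  "inull W B = {x. iapply W B x = 0}"

definition is_cone :: "'a::real_vector set \<Rightarrow> bool" where
  "is_cone K \<longleftrightarrow> K \<noteq> {} \<and> (\<forall>x\<in>K. \<forall>y\<in>K. x + y \<in> K) \<and>
     (\<forall>x\<in>K. \<forall>c::real. c \<ge> 0 \<longrightarrow> c *\<^sub>R x \<in> K)"

definition idual :: "real^'p^'p \<Rightarrow> (real^'p) set \<Rightarrow> (real^'p) set" where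
  "idual W S = {x. \<forall>t\<in>S. x \<bullet> (W *v t) \<ge> 0}"

definition msum :: "'a::plus set \<Rightarrow> 'a set \<Rightarrow> 'a set" where
  "msum S T = {s + t | s t. s \<in> S \<and> t \<in> T}"

end

theory Submission
  imports Defs
begin


definition pen :: "real^'n^'m \<Rightarrow> real^'m^'n \<Rightarrow> bool" where
  "pen A X \<longleftrightarrow> A ** X ** A = A \<and> X ** A ** X = X \<and>
     transpose (A ** X) = A ** X \<and> transpose (X ** A) = X ** A"

lemma sym_matI:
  fixes C :: "real^'n^'n"
  assumes "\<And>u v. u \<bullet> (C *v v) = (C *v u) \<bullet> v"
  shows "transpose C = C"
proof -
  have "transpose C *v u = C *v u" for u
  proof -
    have "(transpose C *v u) \<bullet> v = (C *v u) \<bullet> v" for v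
      using assms[of u v] by (simp add: dot_lmul_matrix)
    then have "(transpose C *v u - C *v u) \<bullet> (transpose C *v u - C *v u) = 0"
      by (simp add: inner_diff_left inner_diff_right)
    then show ?thesis by simp
  qed
  then show ?thesis by (simp add: matrix_eq)
qed

lemma inner_vm: "(x::real^'n) \<bullet> (u v* A) = (A *v x) \<bullet> u"
  by (metis dot_lmul_matrix inner_commute)

lemma inner_transpose: "(x::real^'n) \<bullet> (transpose A *v u) = (A *v x) \<bullet> u"
  by (simp add: inner_vm)

lemma pinv_exists:
  fixes A :: "real^'n^'m"
  shows "\<exists>X. pen A X"
proof -
  define Y where "Y = range (\<lambda>x. A *v x)"
  define W where "W = range (\<lambda>u. transpose A *v u)"
  have subY: "subspace Y" unfolding Y_def
    by (rule linear_subspace_image[OF matrix_vector_mul_linear subspace_UNIV])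
  have subW: "subspace W" unfolding W_def
    by (rule linear_subspace_image[OF matrix_vector_mul_linear subspace_UNIV])
  have AY: "A *v x \<in> Y" for x unfolding Y_def by auto
  have WnullA: "z \<bullet> w = 0" if "A *v z = 0" "w \<in> W" for z w
    using that unfolding W_def by (auto simp: inner_vm)
  have Wnull: "w = 0" if "w \<in> W" "A *v w = 0" for w
    using WnullA[OF that(2) that(1)] by simp
  have decW: "\<exists>w\<in>W. A *v w = A *v x" for x
  proof -
    obtain w z where w: "w \<in> span W" and z: "\<And>v. v \<in> span W \<Longrightarrow> orthogonal z v"
      and xe: "x = w + z" using orthogonal_subspace_decomp_exists[of W x] by blast
    have "transpose A *v (A *v z) \<in> W" unfolding W_def by blast
    then have "transpose A *v (A *v z) \<in> span W" by (rule span_base)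
    then have "z \<bullet> (transpose A *v (A *v z)) = 0"
      using z unfolding orthogonal_def by blast
    then have "A *v z = 0" by (simp add: inner_vm)
    moreover have "w \<in> W" using w subW by (metis span_eq_iff)
    ultimately show ?thesis using xe
      by (auto simp: matrix_vector_right_distrib)
  qed
  have decY: "\<exists>y1\<in>Y. \<forall>v\<in>Y. (y - y1) \<bullet> v = 0" for y
  proof -
    obtain a b where a: "a \<in> span Y" and b: "\<And>v. v \<in> span Y \<Longrightarrow> orthogonal b v"
      and ye: "y = a + b" using orthogonal_subspace_decomp_exists[of Y y] by blast
    have sY: "span Y = Y" using subY by (metis span_eq_iff)
    show ?thesis using a b ye unfolding sY by (auto simp: orthogonal_def intro!: bexI[of _ a])
  qed
  define P where "P y w \<longleftrightarrow> w \<in> W \<and> (\<forall>v\<in>Y. (y - A *v w) \<bullet> v = 0)" for y w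
  have Pex: "\<exists>w. P y w" for y
  proof -
    obtain y1 where y1: "y1 \<in> Y" "\<forall>v\<in>Y. (y - y1) \<bullet> v = 0" using decY by blast
    then obtain x where "y1 = A *v x" unfolding Y_def by auto
    then obtain w where "w \<in> W" "A *v w = y1" using decW by metis
    then show ?thesis using y1 unfolding P_def by auto
  qed
  have Puniq: "w = w'" if "P y w" "P y w'" for y w w'
  proof -
    have d1: "(A *v (w - w')) \<bullet> v = 0" if "v \<in> Y" for v
    proof -
      have "(y - A *v w') \<bullet> v - (y - A *v w) \<bullet> v = 0"
        using \<open>P y w\<close> \<open>P y w'\<close> that unfolding P_def by auto
      then show ?thesis by (simp add: matrix_vector_mult_diff_distrib inner_diff_left)
    qed
    have "(A *v (w - w')) \<bullet> (A *v (w - w')) = 0" using d1 AY by blast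
    then have "A *v (w - w') = 0" by simp
    moreover have "w - w' \<in> W" using that subW unfolding P_def by (auto intro: subspace_diff)
    ultimately have "w - w' = 0" using Wnull by blast
    then show ?thesis by simp
  qed
  define g where "g y = (SOME w. P y w)" for y
  have gP: "P y (g y)" for y unfolding g_def using Pex by (rule someI_ex)
  have gU: "g y = w" if "P y w" for y w using Puniq[OF gP that] .
  have lin: "linear g"
  proof (rule linearI)
    fix a b
    show "g (a + b) = g a + g b"
      apply (rule gU)
      using gP[of a] gP[of b] subW unfolding P_def
      by (auto simp: subspace_add matrix_vector_right_distrib inner_diff_left algebra_simps)
  next
    fix r b
    show "g (r *\<^sub>R b) = r *\<^sub>R g b"
    proof (rule gU)
      have "r *\<^sub>R g b \<in> W" using gP[of b] subW unfolding P_def by (simp add: subspace_scale)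
      moreover have "(r *\<^sub>R b - A *v (r *\<^sub>R g b)) \<bullet> v = 0" if "v \<in> Y" for v
      proof -
        have "r *\<^sub>R b - A *v (r *\<^sub>R g b) = r *\<^sub>R (b - A *v g b)"
          by (simp add: algebra_simps)
        then show ?thesis using gP[of b] that unfolding P_def by simp
      qed
      ultimately show "P (r *\<^sub>R b) (r *\<^sub>R g b)" unfolding P_def by blast
    qed
  qed
  define X where "X = matrix g"
  have Xg: "X *v y = g y" for y
    using lin by (simp add: X_def matrix_works linear_matrix_vector_mul_eq)
  have gin: "g y \<in> W" for y using gP[of y] unfolding P_def by blast
  have gorth: "(y - A *v g y) \<bullet> v = 0" if "v \<in> Y" for y v
    using gP[of y] that unfolding P_def by blast
  have gY: "A *v g y = y" if "y \<in> Y" for y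
  proof -
    have "y - A *v g y \<in> Y" using that AY subY by (blast intro: subspace_diff)
    then have "(y - A *v g y) \<bullet> (y - A *v g y) = 0" using gorth by blast
    then show ?thesis by simp
  qed
  have gW: "g (A *v w) = w" if "w \<in> W" for w
    by (rule gU) (use that in \<open>simp add: P_def\<close>)
  have p1: "A ** X ** A = A"
    unfolding matrix_eq by (simp add: matrix_vector_mul_assoc[symmetric] Xg gY AY)
  have p2: "X ** A ** X = X"
    unfolding matrix_eq by (simp add: matrix_vector_mul_assoc[symmetric] Xg gW gin)
  have p3: "transpose (A ** X) = A ** X"
  proof (rule sym_matI)
    fix u v
    have e1: "u \<bullet> (A *v g v) = (A *v g u) \<bullet> (A *v g v)"
      using gorth[of "A *v g v" u] AY by (simp add: inner_diff_left)
    have e2: "(A *v g u) \<bullet> v = (A *v g u) \<bullet> (A *v g v)"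
    proof -
      have "(v - A *v g v) \<bullet> (A *v g u) = 0" using gorth AY by blast
      then have "(A *v g u) \<bullet> (v - A *v g v) = 0" by (simp only: inner_commute)
      then show ?thesis by (simp only: inner_diff_right)
    qed
    show "u \<bullet> ((A ** X) *v v) = ((A ** X) *v u) \<bullet> v"
      using e1 e2 by (simp add: matrix_vector_mul_assoc[symmetric] Xg)
  qed
  have p4: "transpose (X ** A) = X ** A"
  proof (rule sym_matI)
    fix u v
    obtain wu where wu: "wu \<in> W" "A *v wu = A *v u" using decW by blast
    obtain wv where wv: "wv \<in> W" "A *v wv = A *v v" using decW by blast
    have gu: "g (A *v u) = wu" using gW[OF wu(1)] wu(2) by simp
    have gv: "g (A *v v) = wv" using gW[OF wv(1)] wv(2) by simp
    have "(u - wu) \<bullet> wv = 0"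
      by (rule WnullA) (use wu wv in \<open>simp_all add: matrix_vector_mult_diff_distrib\<close>)
    moreover have "(v - wv) \<bullet> wu = 0"
      by (rule WnullA) (use wu wv in \<open>simp_all add: matrix_vector_mult_diff_distrib\<close>)
    ultimately have "u \<bullet> wv = wu \<bullet> v"
      by (simp add: inner_diff_left inner_diff_right inner_commute)
    then show "u \<bullet> ((X ** A) *v v) = ((X ** A) *v u) \<bullet> v"
      by (simp add: matrix_vector_mul_assoc[symmetric] Xg gu gv)
  qed
  show ?thesis unfolding pen_def using p1 p2 p3 p4 by blast

qed



lemma pen_unique:
  fixes A :: "real^'n^'m"
  assumes "pen A X" "pen A Y" shows "X = Y"
proof -
  from assms have x1: "A**X**A = A" and x2: "X**A**X = X" and x3: "transpose (A**X) = A**X"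
    and x4: "transpose (X**A) = X**A" and y1: "A**Y**A = A" and y2: "Y**A**Y = Y"
    and y3: "transpose (A**Y) = A**Y" and y4: "transpose (Y**A) = Y**A"
    unfolding pen_def by auto
  have F1: "transpose A = transpose A ** A ** Y"
  proof -
    have "transpose A = transpose (A ** Y ** A)" using y1 by simp
    also have "\<dots> = transpose A ** transpose (A**Y)" by (simp add: matrix_transpose_mul)
    also have "\<dots> = transpose A ** (A ** Y)" using y3 by simp
    finally show ?thesis by (simp add: matrix_mul_assoc)
  qed
  have F2: "transpose A = X ** A ** transpose A"
  proof -
    have "transpose A = transpose (A ** (X ** A))" using x1 by (simp add: matrix_mul_assoc)
    also have "\<dots> = transpose (X**A) ** transpose A" by (simp add: matrix_transpose_mul)
    also have "\<dots> = X ** A ** transpose A" using x4 by simp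
    finally show ?thesis .
  qed
  have eX: "X = X ** A ** Y"
  proof -
    have "X = X ** (A ** X)" using x2 by (simp add: matrix_mul_assoc)
    also have "\<dots> = X ** transpose (A**X)" using x3 by simp
    also have "\<dots> = X ** (transpose X ** transpose A)" by (simp add: matrix_transpose_mul)
    also have "\<dots> = X ** (transpose X ** (transpose A ** A ** Y))" using F1 by simp
    also have "\<dots> = X ** transpose (A ** X) ** A ** Y"
      by (simp add: matrix_transpose_mul matrix_mul_assoc)
    also have "\<dots> = X ** (A ** X) ** A ** Y" using x3 by simp
    also have "\<dots> = X ** A ** X ** A ** Y" by (simp add: matrix_mul_assoc)
    also have "\<dots> = X ** A ** Y" using x2 by simp
    finally show ?thesis .
  qed
  have eY: "Y = X ** A ** Y"
  proof -
    have "Y = (Y ** A) ** Y" using y2 by simp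
    also have "\<dots> = transpose (Y ** A) ** Y" using y4 by simp
    also have "\<dots> = transpose A ** transpose Y ** Y" by (simp add: matrix_transpose_mul)
    also have "\<dots> = X ** A ** transpose A ** transpose Y ** Y" using F2 by simp
    also have "\<dots> = X ** A ** (transpose (Y ** A) ** Y)"
      by (simp add: matrix_transpose_mul matrix_mul_assoc)
    also have "\<dots> = X ** A ** (Y ** A ** Y)" using y4 by simp
    also have "\<dots> = X ** A ** Y" using y2 by simp
    finally show ?thesis .
  qed
  show ?thesis using eX eY by simp
qed



definition pinv :: "real^'n^'m \<Rightarrow> real^'m^'n" where
  "pinv A = (THE X. pen A X)"

lemma pen_pinv: "pen A (pinv A)"
  unfolding pinv_def using pinv_exists[of A] pen_unique[of A] by (metis theI)

lemma pinv_eq: "pen A X \<Longrightarrow> pinv A = X"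
  using pen_pinv pen_unique by blast

lemma wt:
  assumes "weight W"
  shows "transpose W = W" "W ** W = mat 1" "C ** W ** W = C"
  using assms unfolding weight_def
  by (auto simp: matrix_mul_assoc[symmetric])

lemma cancel_l:
  assumes "weight W" shows "(W ** C = W ** D) \<longleftrightarrow> C = D"
  by (metis assms matrix_mul_assoc matrix_mul_lid wt(2))

lemma cancel_r:
  assumes "weight W" shows "(C ** W = D ** W) \<longleftrightarrow> C = D"
  by (metis assms wt(3))

lemma wpen:
  fixes Wp :: "real^'p^'p" and Wq :: "real^'q^'q" and B :: "real^'q^'p" and X :: "real^'p^'q"
  assumes p: "weight Wp" and q: "weight Wq"
  shows "(imult Wp (imult Wq B X) B = B \<and>
      imult Wq (imult Wp X B) X = X \<and>
      iadj Wp Wp (imult Wq B X) = imult Wq B X \<and>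
      iadj Wq Wq (imult Wp X B) = imult Wp X B) \<longleftrightarrow> pen B (Wq ** X ** Wp)"
proof -
  note T = wt[OF p] wt[OF q]
  have e1: "imult Wp (imult Wq B X) B = B \<longleftrightarrow> B ** (Wq ** X ** Wp) ** B = B"
    by (simp add: imult_def matrix_mul_assoc)
  have e2: "imult Wq (imult Wp X B) X = X \<longleftrightarrow> Wq ** X ** Wp ** B ** (Wq ** X ** Wp) = Wq ** X ** Wp"
  proof -
    have "Wq ** X ** Wp ** B ** (Wq ** X ** Wp) = Wq ** (X ** Wp ** B ** Wq ** X) ** Wp"
      by (simp add: matrix_mul_assoc)
    then have "Wq ** X ** Wp ** B ** (Wq ** X ** Wp) = Wq ** X ** Wp \<longleftrightarrow>
       Wq ** (X ** Wp ** B ** Wq ** X) ** Wp = Wq ** X ** Wp" by simp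
    also have "\<dots> \<longleftrightarrow> Wq ** (X ** Wp ** B ** Wq ** X) = Wq ** X" by (rule cancel_r[OF p])
    also have "\<dots> \<longleftrightarrow> X ** Wp ** B ** Wq ** X = X" by (rule cancel_l[OF q])
    finally show ?thesis by (simp add: imult_def)
  qed
  have e3: "iadj Wp Wp (imult Wq B X) = imult Wq B X \<longleftrightarrow>
      transpose (B ** (Wq ** X ** Wp)) = B ** (Wq ** X ** Wp)"
  proof -
    have a1: "transpose (B ** (Wq ** X ** Wp)) = (Wp ** transpose (B ** Wq ** X) ** Wp) ** Wp"
      by (simp add: T matrix_transpose_mul matrix_mul_assoc)
    have a2: "B ** (Wq ** X ** Wp) = (B ** Wq ** X) ** Wp"
      by (simp add: matrix_mul_assoc)
    show ?thesis unfolding iadj_def imult_def unfolding a1 unfolding a2 by (rule cancel_r[OF p, symmetric])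
  qed
  have e4: "iadj Wq Wq (imult Wp X B) = imult Wp X B \<longleftrightarrow>
      transpose ((Wq ** X ** Wp) ** B) = (Wq ** X ** Wp) ** B"
  proof -
    have a1: "transpose ((Wq ** X ** Wp) ** B) = Wq ** (Wq ** transpose (X ** Wp ** B) ** Wq)"
      by (simp add: T matrix_transpose_mul matrix_mul_assoc)
    have a2: "(Wq ** X ** Wp) ** B = Wq ** (X ** Wp ** B)"
      by (simp add: matrix_mul_assoc)
    show ?thesis unfolding iadj_def imult_def unfolding a1 unfolding a2 by (rule cancel_l[OF q, symmetric])
  qed
  show ?thesis unfolding pen_def e1 e2 e3 e4 by blast
qed

lemma impinv_eq:
  fixes Wp :: "real^'p^'p" and Wq :: "real^'q^'q" and B :: "real^'q^'p"
  assumes p: "weight Wp" and q: "weight Wq"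
  shows "impinv Wp Wq B = Wq ** pinv B ** Wp"
  unfolding impinv_def
proof (rule the_equality)
  have "Wq ** (Wq ** pinv B ** Wp) ** Wp = pinv B"
    using wt[OF p] wt[OF q] by (simp add: matrix_mul_assoc)
  then show "imult Wp (imult Wq B (Wq ** pinv B ** Wp)) B = B \<and>
    imult Wq (imult Wp (Wq ** pinv B ** Wp) B) (Wq ** pinv B ** Wp) = Wq ** pinv B ** Wp \<and>
    iadj Wp Wp (imult Wq B (Wq ** pinv B ** Wp)) = imult Wq B (Wq ** pinv B ** Wp) \<and>
    iadj Wq Wq (imult Wp (Wq ** pinv B ** Wp) B) = imult Wp (Wq ** pinv B ** Wp) B"
    unfolding wpen[OF p q] by (simp add: pen_pinv)
next
  fix X
  assume "imult Wp (imult Wq B X) B = B \<and>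
      imult Wq (imult Wp X B) X = X \<and>
      iadj Wp Wp (imult Wq B X) = imult Wq B X \<and>
      iadj Wq Wq (imult Wp X B) = imult Wp X B"
  then have "pinv B = Wq ** X ** Wp" unfolding wpen[OF p q] by (rule pinv_eq)
  then show "X = Wq ** pinv B ** Wp"
    by (simp add: matrix_mul_assoc wt[OF p] wt[OF q])
qed



lemma iapply_eq: "iapply W B x = (B ** W) *v x"
  by (simp add: iapply_def matrix_vector_mul_assoc)

lemma transp_sand: "transpose (W::real^'k^'k) = W \<Longrightarrow> transpose (W ** C ** W) = W ** transpose C ** W"
  by (simp add: matrix_transpose_mul matrix_mul_assoc)

lemma pinv_commute:
  fixes M :: "real^'m^'m" and N :: "real^'n^'n" and A :: "real^'n^'m"
  assumes m: "weight M" and n: "weight N" and c: "M ** A = A ** N"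
  shows "N ** pinv A ** M = pinv A"
proof -
  define P where "P = pinv A"
  have pp: "pen A P" unfolding P_def by (rule pen_pinv)
  then have a1: "A ** P ** A = A" and a2: "P ** A ** P = P" and a3: "transpose (A ** P) = A ** P"
    and a4: "transpose (P ** A) = P ** A" unfolding pen_def by auto
  note T = wt[OF m] wt[OF n]
  have c2: "transpose A ** M = N ** transpose A"
    using arg_cong[OF c, of transpose] by (simp add: matrix_transpose_mul T)
  have "pen A (N ** P ** M)"
    unfolding pen_def
  proof (intro conjI)
    have "A ** (N ** P ** M) ** A = (A ** N) ** P ** (M ** A)" by (simp add: matrix_mul_assoc)
    also have "\<dots> = M ** (A ** P ** A) ** N" by (simp add: c matrix_mul_assoc)
    also have "\<dots> = A" by (simp add: a1 c T)
    finally show "A ** (N ** P ** M) ** A = A" .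
    have "N ** P ** M ** A ** (N ** P ** M) = N ** P ** (M ** A) ** N ** P ** M"
      by (simp add: matrix_mul_assoc)
    also have "\<dots> = N ** (P ** A ** P) ** M" by (simp add: c matrix_mul_assoc T)
    also have "\<dots> = N ** P ** M" by (simp add: a2)
    finally show "N ** P ** M ** A ** (N ** P ** M) = N ** P ** M" .
    have e: "A ** (N ** P ** M) = M ** (A ** P) ** M"
    proof -
      have "A ** (N ** P ** M) = (A ** N) ** P ** M" by (simp add: matrix_mul_assoc)
      also have "\<dots> = M ** (A ** P) ** M" by (simp add: c[symmetric] matrix_mul_assoc)
      finally show ?thesis .
    qed
    show "transpose (A ** (N ** P ** M)) = A ** (N ** P ** M)"
      unfolding e transp_sand[OF T(1)] a3 ..
    have e': "N ** P ** M ** A = N ** (P ** A) ** N"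
    proof -
      have "N ** P ** M ** A = N ** P ** (M ** A)" by (simp add: matrix_mul_assoc)
      also have "\<dots> = N ** (P ** A) ** N" by (simp add: c matrix_mul_assoc)
      finally show ?thesis .
    qed
    show "transpose (N ** P ** M ** A) = N ** P ** M ** A"
      unfolding e' transp_sand[OF T(4)] a4 ..
  qed
  then show ?thesis unfolding P_def by (rule pinv_eq[symmetric])
qed



lemma pinv_gram:
  fixes N :: "real^'n^'n" and A :: "real^'n^'m"
  assumes n: "weight N"
  shows "pinv (N ** transpose A ** A) = pinv A ** transpose (pinv A) ** N"
proof (rule pinv_eq)
  define P where "P = pinv A"
  have pp: "pen A P" unfolding P_def by (rule pen_pinv)
  then have a1: "A ** P ** A = A" and a2: "P ** A ** P = P" and a3: "transpose (A ** P) = A ** P"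
    and a4: "transpose (P ** A) = P ** A" unfolding pen_def by auto
  note T = wt[OF n]
  have r2: "transpose P ** transpose A = A ** P" using a3 by (simp add: matrix_transpose_mul)
  have r5: "transpose A ** transpose P = P ** A" using a4 by (simp add: matrix_transpose_mul)
  have r6: "transpose A ** A ** P = transpose A"
  proof -
    have "transpose A ** A ** P = transpose A ** (A ** P)" by (simp add: matrix_mul_assoc)
    also have "\<dots> = transpose A ** (transpose P ** transpose A)" by (simp only: r2)
    also have "\<dots> = transpose (A ** P ** A)" by (simp add: matrix_transpose_mul matrix_mul_assoc)
    finally show ?thesis by (simp add: a1)
  qed
  have r7: "P ** A ** transpose A = transpose A"
  proof -
    have "P ** A ** transpose A = transpose (P ** A) ** transpose A" by (simp only: a4)
    also have "\<dots> = transpose (A ** (P ** A))" by (rule matrix_transpose_mul[symmetric])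
    also have "\<dots> = transpose A" by (simp add: matrix_mul_assoc a1)
    finally show ?thesis .
  qed
  have r7c: "C ** P ** A ** transpose A = C ** transpose A" for C :: "real^'n^'k"
    by (metis r7 matrix_mul_assoc)
  have r1c: "C ** N ** N = C" for C :: "real^'n^'k" using T(3) .
  have r2c: "C ** transpose P ** transpose A = C ** A ** P" for C :: "real^'m^'k"
    by (simp add: r2 matrix_mul_assoc[symmetric])
  have r3c: "C ** A ** P ** A = C ** A" for C :: "real^'m^'k"
    by (metis a1 matrix_mul_assoc)
  have r4c: "C ** P ** A ** P = C ** P" for C :: "real^'n^'k"
    by (metis a2 matrix_mul_assoc)
  have r5c: "C ** transpose A ** transpose P = C ** P ** A" for C :: "real^'n^'k"
    by (simp add: r5 matrix_mul_assoc[symmetric])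
  have r6c: "C ** transpose A ** A ** P = C ** transpose A" for C :: "real^'n^'k"
    by (metis r6 matrix_mul_assoc)
  note R = T r7 r7c r1c r2c r3c r4c r5c r6c r2 r5 r6 a1 a2
  show "pen (N ** transpose A ** A) (P ** transpose P ** N)"
    unfolding pen_def
    by (simp add: matrix_mul_assoc R matrix_transpose_mul)
qed



theorem lemma3p12:
  fixes M :: "real^'m^'m" and N :: "real^'n^'n" and A :: "real^'n^'m"
    and K :: "(real^'n) set"
  assumes "weight M" and "weight N"
    and "M ** A = A ** N"
    and "is_cone K" and "closed K"
    and "iimage N (imult N (iadj N M (impinv M N A)) (mat 1)) (idual N K)
           \<subseteq> iimage N (imult N A (mat 1)) K"
  shows "iimage N (impinv N N (imult M (iadj M N A) A)) (idual N K)
           \<subseteq> msum K (inull N (imult N A (mat 1)))"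
proof -
  note m = assms(1) and n = assms(2) and hyp = assms(6)
  define P where "P = pinv A"
  note T = wt[OF m] wt[OF n]
  have a1: "A ** P ** A = A" using pen_pinv[of A] unfolding P_def pen_def by blast
  have X: "impinv M N A = N ** P ** M" using impinv_eq[OF m n] P_def by simp
  have comm: "N ** P ** M = P" unfolding P_def by (rule pinv_commute[OF m n assms(3)])
  have NP: "N ** P = P ** M" by (metis comm T(3))
  have hmap: "iapply N (imult N (iadj N M (impinv M N A)) (mat 1)) y = transpose P *v y" for y
    unfolding iapply_eq X
    by (simp add: imult_def iadj_def T matrix_transpose_mul matrix_mul_assoc)
  have Amap: "iapply N (imult N A (mat 1)) x = A *v x" for x
    by (simp add: iapply_eq imult_def T)
  have B: "imult M (iadj M N A) A = N ** transpose A ** A"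
    by (simp add: imult_def iadj_def T matrix_mul_assoc)
  have Y: "impinv N N (imult M (iadj M N A) A) = N ** (P ** transpose P ** N) ** N"
    unfolding impinv_eq[OF n n] B pinv_gram[OF n] P_def ..
  have NPPN: "N ** P ** transpose P ** N = P ** transpose P"
  proof -
    have "N ** P ** transpose P ** N = (N ** P) ** transpose (N ** P)"
      by (simp add: matrix_transpose_mul T matrix_mul_assoc)
    also have "\<dots> = P ** M ** transpose (P ** M)" by (simp add: NP)
    also have "\<dots> = P ** transpose P"
      by (simp add: matrix_transpose_mul T matrix_mul_assoc)
    finally show ?thesis .
  qed
  have Ymap: "iapply N (impinv N N (imult M (iadj M N A) A)) y = (P ** transpose P) *v y" for y
    unfolding iapply_eq Y
    by (simp add: matrix_mul_assoc T NPPN[symmetric])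
  show ?thesis
  proof
    fix z assume "z \<in> iimage N (impinv N N (imult M (iadj M N A) A)) (idual N K)"
    then obtain y where y: "y \<in> idual N K" and z: "z = (P ** transpose P) *v y"
      unfolding iimage_def Ymap by blast
    have "transpose P *v y \<in> iimage N (imult N A (mat 1)) K"
      using hyp y unfolding iimage_def hmap by blast
    then obtain k where k: "k \<in> K" and ek: "transpose P *v y = A *v k"
      unfolding iimage_def Amap by blast
    have z2: "z = P *v (A *v k)" using z ek by (simp add: matrix_vector_mul_assoc[symmetric])
    have "A *v (z - k) = 0"
      unfolding z2 by (simp add: matrix_vector_mult_diff_distrib matrix_vector_mul_assoc matrix_mul_assoc a1)
    then have "z - k \<in> inull N (imult N A (mat 1))" unfolding inull_def Amap by simp
    then have zk: "z - k \<in> inull N (imult N A (mat 1))" .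
    then show "z \<in> msum K (inull N (imult N A (mat 1)))"
    proof -
      have "z = k + (z - k)" by simp
      then show ?thesis unfolding msum_def using k \<open>z - k \<in> _\<close> by blast
    qed
  qed
qed

end
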